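(* Let $k$ be a difference field of characteristic $0$, $R=k\{y_1,\ldots,y_n\}$, and $I$ a monomial $\sigma$-ideal of $R$ with support set $S=\{\mathbf{u}\in\mathbb{N}[x]^n:\mathbf{y}^{\mathbf{u}}\in I\}$. Then $I$ is radical and well-mixed if and only if: (a) for all $m\in\mathbb{N}\setminus\{0\}$ and $\mathbf{u}\in\mathbb{N}[x]^n$, $m\mathbf{u}\in S$ implies $\mathbf{u}\in S$; and (b) for all $\mathbf{u},\mathbf{v}\in\mathbb{N}[x]^n$, $\mathbf{u}+\mathbf{v}\in S$ implies $\mathbf{u}+x\mathbf{v}\in S$.
   Context: A difference field is a field $k$ with a ring endomorphism $\sigma$; $R=k\{y_1,\ldots,y_n\}$ is the polynomial ring over $k$ in the variables $\sigma^j(y_i)$, with $\sigma$ extended naturally. For $p=\sum_ic_ix^i\in\mathbb{N}[x]$ and $a\in R$, $a^p=\prod_i(\sigma^i(a))^{c_i}$; $\mathbf{y}^{\mathbf{u}}=y_1^{u_1}\cdots y_n^{u_n}$. A $\sigma$-ideal is an ideal stable under $\sigma$; monomial if generated by monomials; well-mixed if $ab\in I\Rightarrow a\sigma(b)\in I$; radical means radical as an ideal. *)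

theory Defs
  imports "HOL-Library.Poly_Mapping" "HOL-Computational_Algebra.Polynomial"
begin

(* Difference polynomial ring k{y_1,...,y_n}: the variables sigma^j(y_i) are indexed by
  pairs (i, j) with i :: 'n (a finite index type with n = CARD('n) elements) and j :: nat. *)

type_synonym ('n, 'k) dpoly = "(('n \<times> nat) \<Rightarrow>\<^sub>0 nat) \<Rightarrow>\<^sub>0 'k"

definition ring_endo :: "('k::field \<Rightarrow> 'k) \<Rightarrow> bool" where
  "ring_endo \<sigma> \<longleftrightarrow> \<sigma> 1 = 1 \<and> (\<forall>a b. \<sigma> (a + b) = \<sigma> a + \<sigma> b) \<and> (\<forall>a b. \<sigma> (a * b) = \<sigma> a * \<sigma> b)"

(* sigma on exponents: sigma(sigma^j y_i) = sigma^(j+1) y_i. *)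
definition shift_exp :: "(('n \<times> nat) \<Rightarrow>\<^sub>0 nat) \<Rightarrow> (('n \<times> nat) \<Rightarrow>\<^sub>0 nat)" where
  "shift_exp e = Abs_poly_mapping (\<lambda>(i, j). if j = 0 then 0 else Poly_Mapping.lookup e (i, j - 1))"

definition sigma_ext :: "('k \<Rightarrow> 'k) \<Rightarrow> ('n, 'k::comm_ring_1) dpoly \<Rightarrow> ('n, 'k) dpoly" where
  "sigma_ext \<sigma> p = (\<Sum>e\<in>Poly_Mapping.keys p. Poly_Mapping.single (shift_exp e) (\<sigma> (Poly_Mapping.lookup p e)))"

definition is_ideal :: "'a::comm_ring_1 set \<Rightarrow> bool" where
  "is_ideal I \<longleftrightarrow> 0 \<in> I \<and> (\<forall>a\<in>I. \<forall>b\<in>I. a + b \<in> I) \<and> (\<forall>r. \<forall>a\<in>I. r * a \<in> I)"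

definition ideal_gen :: "'a::comm_ring_1 set \<Rightarrow> 'a set" where
  "ideal_gen G = \<Inter>{J. is_ideal J \<and> G \<subseteq> J}"

definition is_monomial :: "('n, 'k::comm_ring_1) dpoly \<Rightarrow> bool" where
  "is_monomial p \<longleftrightarrow> (\<exists>e. p = Poly_Mapping.single e 1)"

definition sigma_ideal :: "('k \<Rightarrow> 'k) \<Rightarrow> ('n, 'k::comm_ring_1) dpoly set \<Rightarrow> bool" where
  "sigma_ideal \<sigma> I \<longleftrightarrow> is_ideal I \<and> (\<forall>a\<in>I. sigma_ext \<sigma> a \<in> I)"

definition monomial_ideal :: "('n, 'k::comm_ring_1) dpoly set \<Rightarrow> bool" where
  "monomial_ideal I \<longleftrightarrow> is_ideal I \<and> (\<exists>G. (\<forall>g\<in>G. is_monomial g) \<and> I = ideal_gen G)"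

definition well_mixed :: "('k \<Rightarrow> 'k) \<Rightarrow> ('n, 'k::comm_ring_1) dpoly set \<Rightarrow> bool" where
  "well_mixed \<sigma> I \<longleftrightarrow> (\<forall>a b. a * b \<in> I \<longrightarrow> a * sigma_ext \<sigma> b \<in> I)"

definition radical_ideal :: "'a::comm_ring_1 set \<Rightarrow> bool" where
  "radical_ideal I \<longleftrightarrow> (\<forall>a (m::nat). a ^ m \<in> I \<longrightarrow> a \<in> I)"

(* y^u for u \<in> N[x]^n: the exponent of sigma^j(y_i) is the j-th coefficient of u_i. *)
definition ymono :: "('n::finite \<Rightarrow> nat poly) \<Rightarrow> ('n, 'k::comm_ring_1) dpoly" where
  "ymono u = Poly_Mapping.single (Abs_poly_mapping (\<lambda>(i, j). coeff (u i) j)) 1"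

definition support_set :: "('n::finite, 'k::comm_ring_1) dpoly set \<Rightarrow> ('n \<Rightarrow> nat poly) set" where
  "support_set I = {u. ymono u \<in> I}"

end

theory Submission
  imports Defs
begin

lemma keys_add_nat:
  fixes e f :: "'a \<Rightarrow>\<^sub>0 nat"
  shows "Poly_Mapping.keys (e + f) = Poly_Mapping.keys e \<union> Poly_Mapping.keys f"
  by (auto simp: in_keys_iff lookup_add)

lemma pm_expand:
  "p = (\<Sum>e\<in>Poly_Mapping.keys p. Poly_Mapping.single e (Poly_Mapping.lookup p e))"
proof (rule poly_mapping_eqI)
  fix k
  show "Poly_Mapping.lookup p k = Poly_Mapping.lookup (\<Sum>e\<in>Poly_Mapping.keys p. Poly_Mapping.single e (Poly_Mapping.lookup p e)) k"
    by (simp add: lookup_sum lookup_single when_def in_keys_iff)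
qed

definition expo :: "('n::finite \<Rightarrow> nat poly) \<Rightarrow> ('n \<times> nat) \<Rightarrow>\<^sub>0 nat" where
  "expo u = Abs_poly_mapping (\<lambda>(i, j). coeff (u i) j)"

lemma ymono_expo: "ymono u = Poly_Mapping.single (expo u) 1"
  by (simp add: ymono_def expo_def)

lemma lookup_expo: "Poly_Mapping.lookup (expo u) (i, j) = coeff (u i) j"
proof -
  have "{x. (case x of (i, j) \<Rightarrow> coeff (u i) j) \<noteq> 0} \<subseteq> (\<Union>i. {i} \<times> {..degree (u i)})"
    by (auto intro: le_degree)
  moreover have "finite (\<Union>i. {i} \<times> {..degree (u i)})" by auto
  ultimately have "finite {x. (case x of (i, j) \<Rightarrow> coeff (u i) j) \<noteq> 0}"
    by (rule finite_subset)
  then show ?thesis by (simp add: expo_def)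
qed

lemma lookup_shift: "Poly_Mapping.lookup (shift_exp e) (i, j) = (if j = 0 then 0 else Poly_Mapping.lookup e (i, j - 1))"
proof -
  have "{x. (case x of (i, j) \<Rightarrow> if j = 0 then 0 else Poly_Mapping.lookup e (i, j - 1)) \<noteq> 0}
     \<subseteq> (\<lambda>(i,j). (i, Suc j)) ` Poly_Mapping.keys e"
    apply (clarsimp simp: in_keys_iff split: if_splits)
    subgoal for a b by (rule image_eqI[where x="(a, b - 1)"]) (auto simp: in_keys_iff)
    done
  then have "finite {x. (case x of (i, j) \<Rightarrow> if j = 0 then 0 else Poly_Mapping.lookup e (i, j - 1)) \<noteq> 0}"
    by (rule finite_subset) auto
  then show ?thesis by (simp add: shift_exp_def)
qed

definition unexpo :: "(('n \<times> nat) \<Rightarrow>\<^sub>0 nat) \<Rightarrow> 'n \<Rightarrow> nat poly" where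
  "unexpo e i = Abs_poly (\<lambda>j. Poly_Mapping.lookup e (i, j))"

lemma coeff_unexpo: "coeff (unexpo e i) = (\<lambda>j. Poly_Mapping.lookup e (i, j))"
proof -
  define n where "n = Max (snd ` Poly_Mapping.keys e)"
  have "Poly_Mapping.lookup e (i, j) = 0" if "j > n" for j
  proof (rule ccontr)
    assume "Poly_Mapping.lookup e (i, j) \<noteq> 0"
    then have "(i,j) \<in> Poly_Mapping.keys e" by (simp add: in_keys_iff)
    then have "j \<le> n" unfolding n_def by (metis Max_ge finite_imageI finite_keys image_eqI snd_conv)
    with that show False by simp
  qed
  then show ?thesis unfolding unexpo_def by (rule coeff_Abs_poly)
qed

lemma expo_unexpo: "expo (unexpo e) = e"
  by (rule poly_mapping_eqI) (auto simp: lookup_expo coeff_unexpo)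

lemma expo_add: "expo (\<lambda>i. u i + v i) = expo u + expo v"
  by (rule poly_mapping_eqI) (auto simp: lookup_expo lookup_add)

definition scal :: "nat \<Rightarrow> ('a \<Rightarrow>\<^sub>0 nat) \<Rightarrow> ('a \<Rightarrow>\<^sub>0 nat)" where
  "scal m e = Abs_poly_mapping (\<lambda>x. m * Poly_Mapping.lookup e x)"

lemma lookup_scal: "Poly_Mapping.lookup (scal m e) x = m * Poly_Mapping.lookup e x"
proof -
  have "finite {x. m * Poly_Mapping.lookup e x \<noteq> 0}"
    by (rule finite_subset[of _ "Poly_Mapping.keys e"]) (auto simp: in_keys_iff)
  then show ?thesis by (simp add: scal_def)
qed

lemma expo_scal: "expo (\<lambda>i. of_nat m * u i) = scal m (expo u)"
  by (rule poly_mapping_eqI) (auto simp: lookup_expo lookup_scal of_nat_poly)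

lemma expo_shift: "expo (\<lambda>i. u i + monom 1 1 * v i) = expo u + shift_exp (expo v)"
  by (rule poly_mapping_eqI) (auto simp: lookup_expo lookup_add lookup_shift coeff_monom_mult)

lemma single_pow: "Poly_Mapping.single e (1::'k::comm_semiring_1) ^ m = Poly_Mapping.single (scal m e) 1"
proof (induction m)
  case 0
  have "scal 0 e = 0" by (rule poly_mapping_eqI) (simp add: lookup_scal)
  then show ?case by simp
next
  case (Suc m)
  have "e + scal m e = scal (Suc m) e" by (rule poly_mapping_eqI) (simp add: lookup_scal lookup_add)
  then show ?case using Suc by (simp add: mult_single)
qed

lemma sigma_single:
  assumes "c \<noteq> 0"
  shows "sigma_ext \<sigma> (Poly_Mapping.single e c) = Poly_Mapping.single (shift_exp e) (\<sigma> c)"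
  using assms by (simp add: sigma_ext_def)


lemma ideal_sum:
  assumes "is_ideal I" "\<And>x. x \<in> A \<Longrightarrow> f x \<in> I"
  shows "sum f A \<in> I"
  using assms(2)
proof (induction A rule: infinite_finite_induct)
  case (infinite A) then show ?case using assms(1) by (simp add: is_ideal_def)
next
  case empty then show ?case using assms(1) by (simp add: is_ideal_def)
next
  case (insert x F) then show ?case using assms(1) by (simp add: is_ideal_def)
qed

lemma ideal_mult: "is_ideal I \<Longrightarrow> a \<in> I \<Longrightarrow> r * a \<in> I"
  by (simp add: is_ideal_def)

lemma ideal_single:
  fixes I :: "('a::comm_monoid_add \<Rightarrow>\<^sub>0 'k::comm_ring_1) set"
  assumes "is_ideal I" "Poly_Mapping.single e 1 \<in> I"
  shows "Poly_Mapping.single (d + e) c \<in> I"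
proof -
  have "Poly_Mapping.single (d + e) c = Poly_Mapping.single d c * Poly_Mapping.single e 1"
    by (simp add: mult_single)
  then show ?thesis using ideal_mult[OF assms] by simp
qed

lemma monomial_mem:
  fixes I :: "('n, 'k::comm_ring_1) dpoly set"
  assumes "monomial_ideal I" "p \<in> I" "e \<in> Poly_Mapping.keys p"
  shows "Poly_Mapping.single e 1 \<in> I"
proof -
  from assms(1) obtain G where I: "is_ideal I" and G: "\<forall>g\<in>G. is_monomial g" and IG: "I = ideal_gen G"
    by (auto simp: monomial_ideal_def)
  define J where "J = {p::('n, 'k) dpoly. \<forall>e\<in>Poly_Mapping.keys p. \<exists>g d. Poly_Mapping.single g 1 \<in> G \<and> e = d + g}"
  have "is_ideal J"
    unfolding is_ideal_def
  proof (intro conjI ballI allI)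
    show "0 \<in> J" by (simp add: J_def)
  next
    fix a b assume "a \<in> J" "b \<in> J"
    then show "a + b \<in> J" using keys_add[of a b] by (auto simp: J_def)
  next
    fix r a assume a: "a \<in> J"
    show "r * a \<in> J"
      unfolding J_def
    proof (rule CollectI, rule ballI)
      fix e assume "e \<in> Poly_Mapping.keys (r * a)"
      then obtain x y where "x \<in> Poly_Mapping.keys r" "y \<in> Poly_Mapping.keys a" "e = x + y"
        using keys_mult by blast
      moreover from a \<open>y \<in> _\<close> obtain g d where "Poly_Mapping.single g 1 \<in> G" "y = d + g"
        by (auto simp: J_def)
      ultimately show "\<exists>g d. Poly_Mapping.single g 1 \<in> G \<and> e = d + g"
        by (intro exI[of _ g] exI[of _ "x + d"]) (simp add: add.assoc)
    qed
  qed
  moreover have "G \<subseteq> J"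
  proof
    fix g assume "g \<in> G"
    with G obtain g0 where "g = Poly_Mapping.single g0 1" by (auto simp: is_monomial_def)
    with \<open>g \<in> G\<close> have "\<forall>e\<in>Poly_Mapping.keys g. Poly_Mapping.single g0 1 \<in> G \<and> e = 0 + g0"
      by simp
    then show "g \<in> J" unfolding J_def by blast
  qed
  ultimately have "I \<subseteq> J" unfolding IG ideal_gen_def by blast
  with assms(2) have "p \<in> J" by blast
  with assms(3) obtain g d where g: "Poly_Mapping.single g 1 \<in> G" and e: "e = d + g"
    unfolding J_def by blast
  have "G \<subseteq> I" unfolding IG ideal_gen_def by blast
  with g have "Poly_Mapping.single g 1 \<in> I" by blast
  from ideal_single[OF I this] e show ?thesis by simp
qed

lemma mem_from_terms:
  fixes I :: "('a::comm_monoid_add \<Rightarrow>\<^sub>0 'k::comm_ring_1) set"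
  assumes "is_ideal I" "\<And>e. e \<in> Poly_Mapping.keys p \<Longrightarrow> Poly_Mapping.single e 1 \<in> I"
  shows "p \<in> I"
proof -
  have "(\<Sum>e\<in>Poly_Mapping.keys p. Poly_Mapping.single e (Poly_Mapping.lookup p e)) \<in> I"
    using ideal_single[OF assms(1) assms(2), of _ 0] by (intro ideal_sum[OF assms(1)]) simp
  then show ?thesis using pm_expand[of p] by simp
qed

definition Psi :: "('a \<Rightarrow> bool) \<Rightarrow> ('a \<Rightarrow> 'b) \<Rightarrow> ('a \<Rightarrow>\<^sub>0 'k::comm_ring_1) \<Rightarrow> ('b \<Rightarrow>\<^sub>0 'k)" where
  "Psi P E p = (\<Sum>e\<in>Poly_Mapping.keys p. if P e then Poly_Mapping.single (E e) (Poly_Mapping.lookup p e) else 0)"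

lemma Psi_superset:
  assumes "finite K" "Poly_Mapping.keys p \<subseteq> K"
  shows "Psi P E p = (\<Sum>e\<in>K. if P e then Poly_Mapping.single (E e) (Poly_Mapping.lookup p e) else 0)"
  unfolding Psi_def
  by (rule sum.mono_neutral_left[OF assms]) (auto simp: in_keys_iff)

lemma Psi_add: "Psi P E (p + q) = Psi P E p + Psi P E q"
proof -
  let ?K = "Poly_Mapping.keys p \<union> Poly_Mapping.keys q"
  have "Psi P E (p + q) = (\<Sum>e\<in>?K. if P e then Poly_Mapping.single (E e) (Poly_Mapping.lookup (p + q) e) else 0)"
    by (rule Psi_superset) (auto dest: set_mp[OF keys_add])
  also have "\<dots> = (\<Sum>e\<in>?K. (if P e then Poly_Mapping.single (E e) (Poly_Mapping.lookup p e) else 0)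
       + (if P e then Poly_Mapping.single (E e) (Poly_Mapping.lookup q e) else 0))"
    by (rule sum.cong) (auto simp: lookup_add single_add)
  also have "\<dots> = Psi P E p + Psi P E q"
    by (simp add: sum.distrib Psi_superset[of ?K p] Psi_superset[of ?K q])
  finally show ?thesis .
qed

lemma Psi_zero [simp]: "Psi P E 0 = 0"
  by (simp add: Psi_def)

lemma Psi_single: "Psi P E (Poly_Mapping.single e c) = (if P e then Poly_Mapping.single (E e) c else 0)"
  by (subst Psi_superset[of "{e}"]) auto

lemma Psi_sum: "Psi P E (sum f A) = (\<Sum>x\<in>A. Psi P E (f x))"
  by (induction A rule: infinite_finite_induct) (auto simp: Psi_add)

lemma Psi_mult:
  fixes E :: "'a::comm_monoid_add \<Rightarrow> 'b::comm_monoid_add"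
  assumes "\<And>e f. E (e + f) = E e + E f" "\<And>e f. P (e + f) \<longleftrightarrow> P e \<and> P f"
  shows "Psi P E (p * q) = Psi P E p * (Psi P E q :: 'b \<Rightarrow>\<^sub>0 'k::comm_ring_1)"
proof -
  have "p * q = (\<Sum>e\<in>Poly_Mapping.keys p. Poly_Mapping.single e (Poly_Mapping.lookup p e)) *
      (\<Sum>f\<in>Poly_Mapping.keys q. Poly_Mapping.single f (Poly_Mapping.lookup q f))"
    using pm_expand[of p] pm_expand[of q] by simp
  also have "\<dots> = (\<Sum>e\<in>Poly_Mapping.keys p. \<Sum>f\<in>Poly_Mapping.keys q.
       Poly_Mapping.single (e + f) (Poly_Mapping.lookup p e * Poly_Mapping.lookup q f))"
    by (simp add: sum_product mult_single)
  finally have pq: "p * q = \<dots>" .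
  have "Psi P E (p * q) = (\<Sum>e\<in>Poly_Mapping.keys p. \<Sum>f\<in>Poly_Mapping.keys q.
       (if P e then Poly_Mapping.single (E e) (Poly_Mapping.lookup p e) else 0) *
       (if P f then Poly_Mapping.single (E f) (Poly_Mapping.lookup q f) else 0))"
    unfolding pq
    apply (simp add: Psi_sum Psi_single assms(2))
    apply (intro sum.cong refl)
    apply (auto simp: assms(1) mult_single)
    done
  also have "\<dots> = Psi P E p * Psi P E q"
    by (simp add: Psi_def sum_product)
  finally show ?thesis .
qed

lemma Psi_nonzero:
  assumes "inj_on E {e. P e}" "e \<in> Poly_Mapping.keys p" "P e"
  shows "Psi P E p \<noteq> 0"
proof -
  have "Poly_Mapping.lookup (Psi P E p) (E e) = (\<Sum>e'\<in>Poly_Mapping.keys p. if e' = e then Poly_Mapping.lookup p e else 0)"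
    unfolding Psi_def lookup_sum
    by (rule sum.cong) (auto simp: lookup_single when_def assms(3) dest: inj_onD[OF assms(1)])
  also have "\<dots> = Poly_Mapping.lookup p e" using assms(2) by simp
  finally show ?thesis using assms(2) by (auto simp: in_keys_iff)
qed


lemma exists_inj: "\<exists>h::('n::finite \<times> nat) \<Rightarrow> nat. inj h"
proof -
  obtain g :: "'n \<Rightarrow> nat" and N where gN: "g ` UNIV = {i. i < N}" "inj_on g UNIV"
    using finite_imp_inj_to_nat_seg[of "UNIV::'n set"] by auto
  have lt: "g i < N" for i using gN(1) by auto
  have "inj (\<lambda>(i, j). j * N + g i)"
  proof (rule injI, clarify)
    fix i j i' j' assume eq: "j * N + g i = j' * N + g i'"
    then have "(j * N + g i) mod N = (j' * N + g i') mod N" by simp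
    hence "g i = g i'" using lt by simp
    hence "i = i'" using gN(2) by (auto dest: injD)
    have "N > 0" using lt[of i] by simp
    from eq \<open>g i = g i'\<close> have "j * N = j' * N" by simp
    with \<open>N > 0\<close> have "j = j'" by simp
    with \<open>i = i'\<close> show "i = i' \<and> j = j'" by simp
  qed
  thus ?thesis by blast
qed

definition Emb :: "('a \<Rightarrow> nat) \<Rightarrow> ('a \<Rightarrow>\<^sub>0 nat) \<Rightarrow> (nat \<Rightarrow>\<^sub>0 nat)" where
  "Emb h e = Abs_poly_mapping (\<lambda>k. if k \<in> range h then Poly_Mapping.lookup e (inv h k) else 0)"

lemma lookup_Emb:
  assumes "inj h"
  shows "Poly_Mapping.lookup (Emb h e) k = (if k \<in> range h then Poly_Mapping.lookup e (inv h k) else 0)"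
proof -
  have "{k. (if k \<in> range h then Poly_Mapping.lookup e (inv h k) else 0) \<noteq> 0} \<subseteq> h ` Poly_Mapping.keys e"
    using assms by (auto simp: in_keys_iff)
  then have "finite {k. (if k \<in> range h then Poly_Mapping.lookup e (inv h k) else 0) \<noteq> 0}"
    by (rule finite_subset) auto
  then show ?thesis by (simp add: Emb_def)
qed

lemma Emb_add: "inj h \<Longrightarrow> Emb h (e + f) = Emb h e + Emb h f"
  by (rule poly_mapping_eqI) (simp add: lookup_Emb lookup_add)

lemma Emb_zero: "inj h \<Longrightarrow> Emb h 0 = 0"
  by (rule poly_mapping_eqI) (simp add: lookup_Emb)

lemma Emb_inj: assumes "inj h" shows "inj (Emb h)"
proof (rule injI)
  fix e f assume "Emb h e = Emb h f"
  then have "Poly_Mapping.lookup (Emb h e) (h x) = Poly_Mapping.lookup (Emb h f) (h x)" for x by simp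
  then show "e = f" using assms by (intro poly_mapping_eqI) (simp add: lookup_Emb)
qed

lemma GEN:
  fixes I :: "('n::finite, 'k::field) dpoly set"
  assumes I: "is_ideal I"
    and mem: "\<And>p e. p \<in> I \<Longrightarrow> e \<in> Poly_Mapping.keys p \<Longrightarrow> Poly_Mapping.single e 1 \<in> I"
    and A: "\<And>m e. m \<noteq> 0 \<Longrightarrow> Poly_Mapping.single (scal m e) 1 \<in> I \<Longrightarrow> Poly_Mapping.single e 1 \<in> I"
    and e0: "Poly_Mapping.single e0 1 \<notin> I"
  obtains \<Psi> :: "('n, 'k) dpoly \<Rightarrow> (nat \<Rightarrow>\<^sub>0 nat) \<Rightarrow>\<^sub>0 'k" where
    "\<And>p q. \<Psi> (p * q) = \<Psi> p * \<Psi> q" "\<Psi> 1 = 1" "\<And>p. p \<in> I \<Longrightarrow> \<Psi> p = 0"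
    "\<And>p e. e \<in> Poly_Mapping.keys p \<Longrightarrow> Poly_Mapping.keys e \<subseteq> Poly_Mapping.keys e0 \<Longrightarrow> \<Psi> p \<noteq> 0"
proof -
  have notin: "Poly_Mapping.single f 1 \<notin> I" if kf: "Poly_Mapping.keys f \<subseteq> Poly_Mapping.keys e0" for f
  proof
    assume fI: "Poly_Mapping.single f 1 \<in> I"
    define m where "m = Suc (\<Sum>x\<in>Poly_Mapping.keys f. Poly_Mapping.lookup f x)"
    have le: "Poly_Mapping.lookup f x \<le> m * Poly_Mapping.lookup e0 x" for x
    proof (cases "x \<in> Poly_Mapping.keys f")
      case True
      then have "Poly_Mapping.lookup f x \<le> (\<Sum>x\<in>Poly_Mapping.keys f. Poly_Mapping.lookup f x)"
        by (intro member_le_sum) auto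
      also have "\<dots> \<le> m" by (simp add: m_def)
      also have "x \<in> Poly_Mapping.keys e0" using True kf by blast
      then have "m \<le> m * Poly_Mapping.lookup e0 x"
        by (auto simp: in_keys_iff)
      finally show ?thesis .
    next
      case False then show ?thesis by (simp add: in_keys_iff)
    qed
    define d where "d = Abs_poly_mapping (\<lambda>x. m * Poly_Mapping.lookup e0 x - Poly_Mapping.lookup f x)"
    have fin: "finite {x. m * Poly_Mapping.lookup e0 x - Poly_Mapping.lookup f x \<noteq> 0}"
      by (rule finite_subset[of _ "Poly_Mapping.keys e0"]) (auto simp: in_keys_iff, metis mult_0_right le0 neq0_conv)
    have ld: "Poly_Mapping.lookup d x = m * Poly_Mapping.lookup e0 x - Poly_Mapping.lookup f x" for x
      using fin unfolding d_def by simp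
    have "scal m e0 = d + f"
      by (rule poly_mapping_eqI) (simp add: ld lookup_add lookup_scal le)
    with ideal_single[OF I fI, of d 1] have "Poly_Mapping.single (scal m e0) 1 \<in> I" by simp
    with A[of m e0] e0 show False by (simp add: m_def)
  qed
  obtain h :: "'n \<times> nat \<Rightarrow> nat" where h: "inj h" using exists_inj by blast
  define P where "P e = (Poly_Mapping.keys e \<subseteq> Poly_Mapping.keys e0)" for e :: "('n \<times> nat) \<Rightarrow>\<^sub>0 nat"
  define \<Psi> :: "('n, 'k) dpoly \<Rightarrow> (nat \<Rightarrow>\<^sub>0 nat) \<Rightarrow>\<^sub>0 'k" where "\<Psi> = Psi P (Emb h)"
  show ?thesis
  proof
    fix p q show "\<Psi> (p * q) = \<Psi> p * \<Psi> q"
      unfolding \<Psi>_def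
      by (rule Psi_mult) (auto simp: Emb_add[OF h] P_def keys_add_nat)
  next
    have "Psi P (Emb h) (Poly_Mapping.single 0 (1::'k)) = Poly_Mapping.single 0 1"
      unfolding Psi_single by (simp add: P_def Emb_zero[OF h])
    then show "\<Psi> 1 = 1" by (simp add: \<Psi>_def)
  next
    fix p assume "p \<in> I"
    then have "\<not> P e" if "e \<in> Poly_Mapping.keys p" for e
      using mem[OF \<open>p \<in> I\<close> that] notin unfolding P_def by blast
    then show "\<Psi> p = 0" unfolding \<Psi>_def Psi_def by (intro sum.neutral) auto
  next
    fix p :: "('n, 'k) dpoly" and e assume "e \<in> Poly_Mapping.keys p" "Poly_Mapping.keys e \<subseteq> Poly_Mapping.keys e0"
    then show "\<Psi> p \<noteq> 0" unfolding \<Psi>_def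
      by (intro Psi_nonzero[of "Emb h" P]) (auto simp: P_def intro: inj_on_subset[OF Emb_inj[OF h]])
  qed
qed


theorem corollary5p10:
  fixes \<sigma> :: "'k::field_char_0 \<Rightarrow> 'k"
    and I :: "('n::finite, 'k) dpoly set"
  assumes "ring_endo \<sigma>"
    and "sigma_ideal \<sigma> I"
    and "monomial_ideal I"
  shows "(radical_ideal I \<and> well_mixed \<sigma> I) \<longleftrightarrow>
          ((\<forall>(m::nat) u. m \<noteq> 0 \<longrightarrow> (\<lambda>i. of_nat m * u i) \<in> support_set I \<longrightarrow> u \<in> support_set I) \<and>
           (\<forall>u v. (\<lambda>i. u i + v i) \<in> support_set I \<longrightarrow>
                  (\<lambda>i. u i + monom 1 1 * v i) \<in> support_set I))"
proof -
  have s1: "\<sigma> 1 = 1" using assms(1) by (simp add: ring_endo_def)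
  have I: "is_ideal I" using assms(3) by (simp add: monomial_ideal_def)
  have S: "u \<in> support_set I \<longleftrightarrow> Poly_Mapping.single (expo u) 1 \<in> I" for u
    by (simp add: support_set_def ymono_expo)
  have sig1: "sigma_ext \<sigma> (Poly_Mapping.single e 1) = Poly_Mapping.single (shift_exp e) 1" for e
    by (simp add: sigma_single s1)
  show ?thesis
  proof
    assume H: "radical_ideal I \<and> well_mixed \<sigma> I"
    show "(\<forall>(m::nat) u. m \<noteq> 0 \<longrightarrow> (\<lambda>i. of_nat m * u i) \<in> support_set I \<longrightarrow> u \<in> support_set I) \<and>
           (\<forall>u v. (\<lambda>i. u i + v i) \<in> support_set I \<longrightarrow>
                  (\<lambda>i. u i + monom 1 1 * v i) \<in> support_set I)"
    proof (intro conjI allI impI)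
      fix m :: nat and u :: "'n \<Rightarrow> nat poly"
      assume "(\<lambda>i. of_nat m * u i) \<in> support_set I"
      then have "Poly_Mapping.single (expo u) (1::'k) ^ m \<in> I"
        by (simp add: S expo_scal single_pow)
      with H show "u \<in> support_set I" by (auto simp: radical_ideal_def S)
    next
      fix u v :: "'n \<Rightarrow> nat poly"
      assume "(\<lambda>i. u i + v i) \<in> support_set I"
      then have "Poly_Mapping.single (expo u) (1::'k) * Poly_Mapping.single (expo v) 1 \<in> I"
        by (simp add: S expo_add mult_single)
      with H have "Poly_Mapping.single (expo u) (1::'k) * sigma_ext \<sigma> (Poly_Mapping.single (expo v) 1) \<in> I"
        by (auto simp: well_mixed_def)
      then show "(\<lambda>i. u i + monom 1 1 * v i) \<in> support_set I"
        unfolding S expo_shift by (simp add: sig1 mult_single)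
    qed
  next
    assume H: "(\<forall>(m::nat) u. m \<noteq> 0 \<longrightarrow> (\<lambda>i. of_nat m * u i) \<in> support_set I \<longrightarrow> u \<in> support_set I) \<and>
           (\<forall>u v. (\<lambda>i. u i + v i) \<in> support_set I \<longrightarrow>
                  (\<lambda>i. u i + monom 1 1 * v i) \<in> support_set I)"
    have mem: "Poly_Mapping.single e 1 \<in> I" if "p \<in> I" "e \<in> Poly_Mapping.keys p" for p e
      using monomial_mem[OF assms(3) that] .
    have A: "Poly_Mapping.single e 1 \<in> I" if "m \<noteq> 0" "Poly_Mapping.single (scal m e) 1 \<in> I" for m e
    proof -
      have "(\<lambda>i. of_nat m * unexpo e i) \<in> support_set I"
        using that(2) by (simp add: S expo_scal expo_unexpo)
      with H that(1) have "unexpo e \<in> support_set I" by blast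
      then show ?thesis by (simp add: S expo_unexpo)
    qed
    have B: "Poly_Mapping.single (e + shift_exp f) 1 \<in> I" if "Poly_Mapping.single (e + f) 1 \<in> I" for e f
    proof -
      have "(\<lambda>i. unexpo e i + unexpo f i) \<in> support_set I"
        using that by (simp add: S expo_add expo_unexpo)
      with H have "(\<lambda>i. unexpo e i + monom 1 1 * unexpo f i) \<in> support_set I" by blast
      then show ?thesis unfolding S expo_shift by (simp add: expo_unexpo)
    qed
    have KEY: "Poly_Mapping.single (s + t) 1 \<in> I"
      if ab: "a * b \<in> I" and s: "s \<in> Poly_Mapping.keys a" and t: "t \<in> Poly_Mapping.keys b" for a b s t
    proof (rule ccontr)
      assume ns: "Poly_Mapping.single (s + t) 1 \<notin> I"
      obtain \<Psi> :: "('n, 'k) dpoly \<Rightarrow> (nat \<Rightarrow>\<^sub>0 nat) \<Rightarrow>\<^sub>0 'k" where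
        P: "\<And>p q. \<Psi> (p * q) = \<Psi> p * \<Psi> q" "\<And>p. p \<in> I \<Longrightarrow> \<Psi> p = 0"
        "\<And>p e. e \<in> Poly_Mapping.keys p \<Longrightarrow> Poly_Mapping.keys e \<subseteq> Poly_Mapping.keys (s + t) \<Longrightarrow> \<Psi> p \<noteq> 0"
        by (rule GEN[of I "s + t"]) (use I mem A ns in blast)+
      have "\<Psi> a \<noteq> 0" by (rule P(3)[OF s]) (simp add: keys_add_nat)
      moreover have "\<Psi> b \<noteq> 0" by (rule P(3)[OF t]) (simp add: keys_add_nat)
      ultimately have "\<Psi> (a * b) \<noteq> 0" by (simp add: P(1))
      with P(2)[OF ab] show False by simp
    qed
    have rad: "radical_ideal I"
      unfolding radical_ideal_def
    proof (intro allI impI)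
      fix a :: "('n, 'k) dpoly" and m :: nat
      assume am: "a ^ m \<in> I"
      show "a \<in> I"
      proof (cases "m = 0")
        case True
        with am have "1 \<in> I" by simp
        then have "a * 1 \<in> I" by (rule ideal_mult[OF I])
        then show ?thesis by simp
      next
        case False
        show ?thesis
        proof (rule mem_from_terms[OF I], rule ccontr)
          fix s assume s: "s \<in> Poly_Mapping.keys a" and ns: "Poly_Mapping.single s 1 \<notin> I"
          obtain \<Psi> :: "('n, 'k) dpoly \<Rightarrow> (nat \<Rightarrow>\<^sub>0 nat) \<Rightarrow>\<^sub>0 'k" where
            P: "\<And>p q. \<Psi> (p * q) = \<Psi> p * \<Psi> q" "\<Psi> 1 = 1" "\<And>p. p \<in> I \<Longrightarrow> \<Psi> p = 0"
            "\<And>p e. e \<in> Poly_Mapping.keys p \<Longrightarrow> Poly_Mapping.keys e \<subseteq> Poly_Mapping.keys s \<Longrightarrow> \<Psi> p \<noteq> 0"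
            by (rule GEN[of I s]) (use I mem A ns in blast)+
          have pw: "\<Psi> (a ^ k) = \<Psi> a ^ k" for k
            by (induction k) (simp_all add: P(1,2))
          have "\<Psi> a \<noteq> 0" by (rule P(4)[OF s]) simp
          then have "\<Psi> a ^ m \<noteq> 0" by simp
          with P(3)[OF am] pw show False by simp
        qed
      qed
    qed
    have wm: "well_mixed \<sigma> I"
      unfolding well_mixed_def
    proof (intro allI impI)
      fix a b :: "('n, 'k) dpoly"
      assume ab: "a * b \<in> I"
      have "a * sigma_ext \<sigma> b = (\<Sum>s\<in>Poly_Mapping.keys a. Poly_Mapping.single s (Poly_Mapping.lookup a s)) *
          (\<Sum>t\<in>Poly_Mapping.keys b. Poly_Mapping.single (shift_exp t) (\<sigma> (Poly_Mapping.lookup b t)))"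
        using pm_expand[of a] by (simp add: sigma_ext_def)
      also have "\<dots> = (\<Sum>s\<in>Poly_Mapping.keys a. \<Sum>t\<in>Poly_Mapping.keys b.
          Poly_Mapping.single (0 + (s + shift_exp t)) (Poly_Mapping.lookup a s * \<sigma> (Poly_Mapping.lookup b t)))"
        by (simp add: sum_product mult_single)
      also have "\<dots> \<in> I"
        by (intro ideal_sum[OF I] ideal_single[OF I] B KEY[OF ab])
      finally show "a * sigma_ext \<sigma> b \<in> I" .
    qed
    from rad wm show "radical_ideal I \<and> well_mixed \<sigma> I" by blast
  qed
qed

end
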